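(* Let $x_0,\dots,x_q$ be complex numbers (repetitions allowed), $q\ge0$, $0\le j\le q$, and $\beta>0$. Then $$\int_0^{\beta/2}\tau\,e^{-\tau[x_j,\ldots,x_q]}\,e^{-(\beta-\tau)[x_0,\ldots,x_j]}\,\mathrm{d}\tau=\sum_{r=0}^{j}e^{-\frac{\beta}{2}[x_0,\ldots,x_r]}\sum_{m=j}^{q}e^{-\frac{\beta}{2}[x_r,\ldots,x_q,x_j,x_m]}.$$
   Context: For $t\in\mathbb{R}$ and numbers $y_0,\dots,y_p$ (repetitions allowed), $e^{t[y_0,\ldots,y_p]}$ denotes the divided difference of $f(x)=e^{tx}$, $f[y_0,\ldots,y_p]=\frac{1}{2\pi i}\oint_\Gamma\frac{f(x)}{\prod_{i=0}^p(x-y_i)}\,\mathrm{d}x$, $\Gamma$ a positively oriented contour enclosing all $y_i$. The multiset $[x_r,\ldots,x_q,x_j,x_m]$ consists of $x_r,\ldots,x_q$ together with one extra copy of $x_j$ and one extra copy of $x_m$. *)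

theory Defs
  imports "HOL-Complex_Analysis.Complex_Analysis"
begin

text \<open>Divided difference of f(x) = exp(t x) at the points ys (a list, repetitions allowed),
  defined by the contour integral over a positively oriented circle enclosing all points.\<close>
definition dd_exp :: "real \<Rightarrow> complex list \<Rightarrow> complex" where
  "dd_exp t ys =
     contour_integral (circlepath 0 (1 + sum_list (map norm ys)))
       (\<lambda>z. exp (complex_of_real t * z) / prod_list (map (\<lambda>y. z - y) ys))
     / (2 * complex_of_real pi * \<i>)"

end

theory Submission
  imports Defs
begin

definition P :: "complex list \<Rightarrow> complex \<Rightarrow> complex" where
  "P ys z = prod_list (map (\<lambda>y. z - y) ys)"

definition CI :: "real \<Rightarrow> complex \<Rightarrow> complex list \<Rightarrow> complex" where
  "CI R s ys = contour_integral (circlepath 0 R) (\<lambda>z. exp (s*z) / P ys z) / (2 * of_real pi * \<i>)"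

definition G :: "complex \<Rightarrow> complex list \<Rightarrow> complex" where
  "G s ys = CI (1 + sum_list (map norm ys)) s ys"

lemma dd_G: "dd_exp t ys = G (of_real t) ys"
  by (simp add: dd_exp_def G_def CI_def P_def)

lemma P_nz: "(\<And>y. y \<in> set ys \<Longrightarrow> norm y < norm z) \<Longrightarrow> P ys z \<noteq> 0"
  unfolding P_def by (induction ys) auto

lemma P_snoc: "P (ys @ [y]) z = P ys z * (z - y)"
  unfolding P_def by simp

lemma P_cont [continuous_intros]: "continuous_on A (P ys)"
  unfolding P_def by (induction ys) (auto intro!: continuous_intros)

lemma P_holo [holomorphic_intros]: "P ys holomorphic_on A"
  unfolding P_def by (induction ys) (auto intro!: holomorphic_intros)

lemma norm_le_sum: "y \<in> set ys \<Longrightarrow> norm y \<le> sum_list (map norm ys)"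
proof (induction ys)
  case (Cons a ys)
  have "0 \<le> sum_list (map norm ys)" by (induction ys) auto
  then show ?case using Cons by (auto intro: add_increasing add_increasing2)
qed simp

lemma sum_norm_nonneg: "0 \<le> sum_list (map norm (ys::complex list))"
  by (induction ys) auto

lemma CI_indep:
  assumes "\<And>y. y \<in> set ys \<Longrightarrow> norm y < R1" "\<And>y. y \<in> set ys \<Longrightarrow> norm y < R2" "0 < R1" "0 < R2"
  shows "CI R1 s ys = CI R2 s ys"
proof -
  define M where "M = Max (insert 0 (norm ` set ys))"
  have fin: "finite (insert 0 (norm ` set ys))" by simp
  have M1: "M < R1" "M < R2" unfolding M_def using assms by (auto simp: Max_less_iff)
  have M2: "\<And>y. y \<in> set ys \<Longrightarrow> norm y \<le> M" unfolding M_def using fin by (auto intro: Max_ge)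
  define S where "S = {z::complex. M < norm z}"
  have oS: "open S" unfolding S_def by (intro open_Collect_less continuous_intros)
  have hol: "(\<lambda>z. exp (s*z) / P ys z) holomorphic_on S"
    by (intro holomorphic_intros) (auto simp: S_def intro!: P_nz dest!: M2)
  have hom: "homotopic_loops S (circlepath 0 R1) (circlepath 0 R2)"
  proof (rule homotopic_loops_linear)
    fix t :: real assume "t \<in> {0..1}"
    show "closed_segment (circlepath 0 R1 t) (circlepath 0 R2 t) \<subseteq> S"
    proof
      fix w assume "w \<in> closed_segment (circlepath 0 R1 t) (circlepath 0 R2 t)"
      then obtain u where u: "0 \<le> u" "u \<le> 1" "w = (1 - u) *\<^sub>R circlepath 0 R1 t + u *\<^sub>R circlepath 0 R2 t"
        unfolding closed_segment_def by auto
      have e: "exp (2 * of_real pi * \<i> * of_real t) = exp (\<i> * of_real (2*pi*t))"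
        by (simp add: algebra_simps)
      have "w = complex_of_real ((1-u)*R1 + u*R2) * exp (\<i> * of_real (2*pi*t))"
        using u unfolding e[symmetric] by (simp add: circlepath scaleR_conv_of_real algebra_simps)
      then have "norm w = \<bar>(1-u)*R1 + u*R2\<bar>" by (simp only: norm_mult norm_of_real norm_exp_i_times) simp
      then have "norm w = (1-u)*R1 + u*R2" using u assms by simp
      moreover have "M < (1-u)*R1 + u*R2"
      proof -
        have "(1-u)*M \<le> (1-u)*R1" "u*M \<le> u*R2" using u M1 by (auto intro: mult_left_mono)
        moreover have "(1-u)*M < (1-u)*R1 \<or> u*M < u*R2" using u M1 by (cases "u = 0") auto
        ultimately show ?thesis by (auto simp: algebra_simps)
      qed
      ultimately show "w \<in> S" by (simp add: S_def)
    qed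
  qed auto
  have "contour_integral (circlepath 0 R1) (\<lambda>z. exp (s*z) / P ys z) =
        contour_integral (circlepath 0 R2) (\<lambda>z. exp (s*z) / P ys z)"
    by (rule Cauchy_theorem_homotopic_loops[OF hom oS hol]) auto
  then show ?thesis by (simp add: CI_def)
qed

lemma CI_Nil: "CI R s [] = 0"
proof -
  have "((\<lambda>z. exp (s*z) / P [] z) has_contour_integral 0) (circlepath 0 R)"
    by (rule Cauchy_theorem_convex_simple[of _ UNIV]) (auto simp: P_def intro!: holomorphic_intros)
  then show ?thesis by (simp add: CI_def contour_integral_unique)
qed

lemma CI_single: assumes "norm y < R" shows "CI R s [y] = exp (s*y)"
proof -
  have "((\<lambda>u. exp (s*u) / (u - y)) has_contour_integral (2 * of_real pi * \<i> * exp (s*y))) (circlepath 0 R)"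
    by (rule Cauchy_integral_circlepath) (use assms in \<open>auto intro!: continuous_intros holomorphic_intros\<close>)
  then show ?thesis by (simp add: CI_def P_def contour_integral_unique)
qed

definition gam :: "real \<Rightarrow> real \<Rightarrow> complex" where
  "gam R x = of_real R * exp (2 * of_real pi * \<i> * of_real x)"

lemma gam_circ: "circlepath 0 R = gam R"
  by (simp add: circlepath gam_def fun_eq_iff)

lemma norm_gam: "0 \<le> R \<Longrightarrow> norm (gam R x) = R"
proof -
  have e: "exp (2 * of_real pi * \<i> * of_real x) = exp (\<i> * of_real (2*pi*x))"
    by (simp add: algebra_simps)
  assume "0 \<le> R" then show ?thesis by (simp add: gam_def e norm_mult del: of_real_mult)
qed

lemma ci_param: "contour_integral (circlepath 0 R) f =
  integral (cbox 0 1) (\<lambda>x. f (gam R x) * (2 * pi * \<i> * R * exp (2 * of_real pi * \<i> * x)))"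
  unfolding contour_integral_integral vector_derivative_circlepath by (simp add: gam_circ cbox_interval)

definition CI2 :: "real \<Rightarrow> complex \<Rightarrow> complex list \<Rightarrow> complex" where
  "CI2 R s ys = contour_integral (circlepath 0 R) (\<lambda>z. z * exp (s*z) / P ys z) / (2 * of_real pi * \<i>)"

lemma gam_cont [continuous_intros]: "continuous_on A (gam R)"
  unfolding gam_def by (intro continuous_intros)

lemma Pgam_cont: "continuous_on A (\<lambda>x. P ys (gam R x))"
  by (rule continuous_on_compose2[OF P_cont[of UNIV ys] gam_cont]) auto

lemma d1: "((\<lambda>s. exp (s*c) / d * e) has_field_derivative (c * exp (s*c) / d * e)) (at s within U)"
proof -
  have "((\<lambda>s. exp (s*c) * (e/d)) has_field_derivative (exp (s*c) * (1*c)) * (e/d)) (at s within U)"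
    by (rule derivative_eq_intros refl | simp)+
  moreover have "(\<lambda>s. exp (s*c) * (e/d)) = (\<lambda>s. exp (s*c) / d * e)" by (simp add: fun_eq_iff)
  moreover have "(exp (s*c) * (1*c)) * (e/d) = c * exp (s*c) / d * e" by simp
  ultimately show ?thesis by metis
qed

lemma CI_deriv:
  assumes "\<And>y. y \<in> set ys \<Longrightarrow> norm y < R" "0 < R"
  shows "((\<lambda>s. CI R s ys) has_field_derivative CI2 R s ys) (at s)"
proof -
  have nz: "P ys (gam R x) \<noteq> 0" for x
    using assms by (intro P_nz) (simp add: norm_gam)
  define E where "E = (\<lambda>x::real. (2 * pi * \<i> * R * exp (2 * of_real pi * \<i> * x)))"
  have Ec: "continuous_on A E" for A unfolding E_def by (intro continuous_intros)
  define F where "F = (\<lambda>s x. exp (s * gam R x) / P ys (gam R x) * E x)"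
  define Fx where "Fx = (\<lambda>s x. gam R x * exp (s * gam R x) / P ys (gam R x) * E x)"
  have "((\<lambda>s. integral (cbox 0 1) (F s)) has_field_derivative integral (cbox 0 1) (Fx s)) (at s within UNIV)"
  proof (rule leibniz_rule_field_derivative)
    fix s :: complex and x :: real
    show "((\<lambda>s. F s x) has_field_derivative Fx s x) (at s within UNIV)"
      unfolding F_def Fx_def by (rule d1)
  next
    fix s :: complex
    have "continuous_on (cbox 0 1) (F s)"
      unfolding F_def using nz
      by (intro continuous_on_mult continuous_on_divide Ec Pgam_cont continuous_on_exp continuous_on_mult_left gam_cont) auto
    then show "F s integrable_on cbox 0 1" by (rule integrable_continuous)
  next
    have c1: "continuous_on (UNIV \<times> cbox 0 1) (\<lambda>p::complex\<times>real. gam R (snd p))"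
      by (rule continuous_on_compose2[OF gam_cont continuous_on_snd]) auto
    have c2: "continuous_on (UNIV \<times> cbox 0 1) (\<lambda>p::complex\<times>real. P ys (gam R (snd p)))"
      by (rule continuous_on_compose2[OF Pgam_cont continuous_on_snd]) auto
    have c3: "continuous_on (UNIV \<times> cbox 0 1) (\<lambda>p::complex\<times>real. E (snd p))"
      by (rule continuous_on_compose2[OF Ec continuous_on_snd]) auto
    show "continuous_on (UNIV \<times> cbox 0 1) (\<lambda>(s, x). Fx s x)"
      unfolding Fx_def case_prod_unfold using nz
      by (intro continuous_on_mult continuous_on_divide c1 c2 c3 continuous_on_exp continuous_on_fst) auto
  qed auto
  then show ?thesis
    unfolding CI_def CI2_def ci_param F_def Fx_def E_def
    by (intro DERIV_cdivide) simp
qed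

lemma G_indep: assumes "\<And>y. y \<in> set ys \<Longrightarrow> norm y < R" "0 < R"
  shows "G s ys = CI R s ys"
  unfolding G_def using assms norm_le_sum[of _ ys] sum_norm_nonneg[of ys]
  by (intro CI_indep) force+

lemma G_Nil: "G s [] = 0" by (simp add: G_def CI_Nil)

lemma G_single: "G s [y] = exp (s*y)" by (simp add: G_def CI_single)

lemma cont_sphere: assumes "\<And>y. y \<in> set ys \<Longrightarrow> norm y < R" "continuous_on (sphere 0 R) g"
  shows "continuous_on (sphere 0 R) (\<lambda>z. g z / P ys z)"
  using assms by (intro continuous_on_divide P_cont) (auto intro!: P_nz)

lemma G_deriv: "((\<lambda>s. G s (ys @ [y])) has_field_derivative (y * G s (ys @ [y]) + G s ys)) (at s)"
proof -
  define R where "R = 1 + sum_list (map norm (ys @ [y]))"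
  have lt: "\<And>w. w \<in> set (ys @ [y]) \<Longrightarrow> norm w < R" unfolding R_def
    using norm_le_sum[of _ "ys @ [y]"] by force
  have R0: "0 < R" unfolding R_def using sum_norm_nonneg[of "ys @ [y]"] by linarith
  have G1: "G s (ys @ [y]) = CI R s (ys @ [y])" by (simp add: G_def R_def)
  have G2: "G s ys = CI R s ys" using lt R0 by (intro G_indep) auto
  have D: "((\<lambda>s. G s (ys @ [y])) has_field_derivative CI2 R s (ys @ [y])) (at s)"
    unfolding G_def R_def[symmetric] using lt R0 by (rule CI_deriv)
  define f1 where "f1 = (\<lambda>z. exp (s*z) / P ys z)"
  define f2 where "f2 = (\<lambda>z. exp (s*z) / P (ys @ [y]) z)"
  have i1: "(f1 has_contour_integral contour_integral (circlepath 0 R) f1) (circlepath 0 R)"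
    unfolding f1_def using lt R0
    by (intro has_contour_integral_integral contour_integrable_continuous_circlepath)
       (auto intro!: cont_sphere continuous_intros)
  have i2: "(f2 has_contour_integral contour_integral (circlepath 0 R) f2) (circlepath 0 R)"
    unfolding f2_def using lt R0
    by (intro has_contour_integral_integral contour_integrable_continuous_circlepath)
       (auto intro!: cont_sphere continuous_intros)
  have "((\<lambda>z. f1 z + y * f2 z) has_contour_integral
          (contour_integral (circlepath 0 R) f1 + y * contour_integral (circlepath 0 R) f2)) (circlepath 0 R)"
    by (intro has_contour_integral_add has_contour_integral_lmul i1 i2)
  then have "((\<lambda>z. z * exp (s*z) / P (ys @ [y]) z) has_contour_integral
          (contour_integral (circlepath 0 R) f1 + y * contour_integral (circlepath 0 R) f2)) (circlepath 0 R)"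
  proof (rule has_contour_integral_eq)
    fix z assume "z \<in> path_image (circlepath 0 R)"
    then have nz: "norm z = R" using R0 by auto
    have a: "P ys z \<noteq> 0" using lt nz by (intro P_nz) auto
    have b: "z - y \<noteq> 0" using lt[of y] nz by auto
    show "f1 z + y * f2 z = z * exp (s*z) / P (ys @ [y]) z"
      unfolding f1_def f2_def P_snoc using a b by (simp add: field_simps)
  qed
  then have "CI2 R s (ys @ [y]) = y * G s (ys @ [y]) + G s ys"
    unfolding CI2_def G1 G2 CI_def f1_def[symmetric] f2_def[symmetric]
    by (simp add: contour_integral_unique field_simps)
  then show ?thesis using D by simp
qed

lemma P_lower: "(\<And>y. y \<in> set ys \<Longrightarrow> a \<le> norm (z - y)) \<Longrightarrow> 0 \<le> a \<Longrightarrow> a ^ length ys \<le> norm (P ys z)"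
proof (induction ys)
  case Nil then show ?case by (simp add: P_def)
next
  case (Cons b ys)
  have "a * a ^ length ys \<le> norm (z - b) * norm (P ys z)"
    using Cons by (intro mult_mono) auto
  then show ?case by (simp add: P_def norm_mult)
qed

lemma G_zero: assumes "2 \<le> length ys" shows "G 0 ys = 0"
proof (rule ccontr)
  assume ne: "G 0 ys \<noteq> 0"
  define S where "S = sum_list (map norm ys)"
  have S0: "0 \<le> S" unfolding S_def by (rule sum_norm_nonneg)
  define R where "R = max (2 * (1 + S)) (8 / norm (G 0 ys) + 1)"
  have R1: "2 * (1 + S) \<le> R" "8 / norm (G 0 ys) < R" unfolding R_def by auto
  have R0: "0 < R" using R1(1) S0 by (smt (verit))
  have lt: "\<And>y. y \<in> set ys \<Longrightarrow> norm y < R" using norm_le_sum[of _ ys] R1 S0 unfolding S_def by force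
  have GC: "G 0 ys = CI R 0 ys" using lt R0 by (rule G_indep)
  have int: "((\<lambda>z. exp (0*z) / P ys z) has_contour_integral contour_integral (circlepath 0 R) (\<lambda>z. exp (0*z) / P ys z)) (circlepath 0 R)"
    using lt R0
    by (intro has_contour_integral_integral contour_integrable_continuous_circlepath)
       (auto intro!: cont_sphere continuous_intros)
  have bnd: "norm (contour_integral (circlepath 0 R) (\<lambda>z. exp (0*z) / P ys z)) \<le> (4 / R^2) * (2*pi*R)"
  proof (rule has_contour_integral_bound_circlepath[OF int])
    fix z :: complex assume nz: "norm (z - 0) = R"
    have h: "R/2 \<le> norm (z - y)" if "y \<in> set ys" for y
    proof -
      have "norm z - norm y \<le> norm (z - y)" by (rule norm_triangle_ineq2)
      moreover have "norm y \<le> S" using norm_le_sum[OF that] unfolding S_def .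
      ultimately show ?thesis using nz R1 by simp
    qed
    have "(R/2) ^ length ys \<le> norm (P ys z)" using h R0 by (intro P_lower) auto
    moreover have "(R/2)^2 \<le> (R/2) ^ length ys"
      using assms R1 S0 by (intro power_increasing) auto
    ultimately have "(R/2)^2 \<le> norm (P ys z)" by linarith
    moreover have "0 < (R/2)^2" using R0 by simp
    ultimately have le: "(R/2)^2 \<le> norm (P ys z)" "0 < (R/2)^2" by auto
    then have "0 < norm (P ys z) * (R/2)^2" by (intro mult_pos_pos) auto
    then have "1 / norm (P ys z) \<le> 1 / (R/2)^2"
      using le by (intro divide_left_mono) auto
    then show "norm (exp (0*z) / P ys z) \<le> 4 / R^2" by (simp add: norm_divide power2_eq_square)
  qed (use R0 in auto)
  have "norm (G 0 ys) * (2 * pi) = norm (contour_integral (circlepath 0 R) (\<lambda>z. exp (0*z) / P ys z))"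
    unfolding GC CI_def by (simp add: norm_divide norm_mult)
  also have "\<dots> \<le> 8 * pi / R" using bnd R0 by (simp add: power2_eq_square field_simps)
  finally have "norm (G 0 ys) \<le> 4 / R" using R0 by (simp add: field_simps)
  then have "norm (G 0 ys) * R \<le> 4" using R0 by (simp add: field_simps)
  moreover have "8 < norm (G 0 ys) * R" using R1(2) ne by (simp add: field_simps)
  ultimately show False by linarith
qed

lemma G_mset: assumes "mset ys = mset zs" shows "G s ys = G s zs"
proof -
  have 1: "sum_list (map norm ys) = sum_list (map norm zs)"
    by (metis assms mset_map sum_mset_sum_list)
  have 2: "P ys = P zs"
    unfolding P_def by (metis assms mset_map prod_mset_prod_list)
  show ?thesis unfolding G_def CI_def 1 2 ..
qed

lemma G_deriv_upt: assumes "k \<le> m"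
  shows "((\<lambda>t. G t (map x [k..<Suc m])) has_field_derivative
           (x m * G t (map x [k..<Suc m]) + G t (map x [k..<m]))) (at t)"
proof -
  have e: "map x [k..<Suc m] = map x [k..<m] @ [x m]" using assms by simp
  show ?thesis unfolding e by (rule G_deriv)
qed

lemma G_zero_upt: assumes "k < m" shows "G 0 (map x [k..<Suc m]) = 0"
  using assms by (intro G_zero) auto

lemma ode_C:
  fixes f g u :: "complex \<Rightarrow> complex"
  assumes df: "\<And>s. (f has_field_derivative (c * f s + u s)) (at s)"
    and dg: "\<And>s. (g has_field_derivative (c * g s + u s)) (at s)" and i: "f 0 = g 0"
  shows "f s = g s"
proof -
  define d where "d = (\<lambda>s. exp (- (c * s)) * (f s - g s))"
  have "(d has_field_derivative 0) (at s within UNIV)" for s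
  proof -
    have h1: "((\<lambda>s. exp (- (c * s))) has_field_derivative (exp (- (c * s)) * (-c))) (at s)"
      by (rule derivative_eq_intros refl | simp)+
    have h2: "((\<lambda>s. f s - g s) has_field_derivative ((c*f s+u s) - (c*g s + u s))) (at s)"
      by (rule DERIV_diff df dg)+
    have "(d has_field_derivative (exp (- (c * s)) * (-c) * (f s - g s) + ((c*f s+u s) - (c*g s + u s)) * exp (- (c * s)))) (at s)"
      unfolding d_def by (rule DERIV_mult[OF h1 h2])
    then show ?thesis by (rule DERIV_cong) (simp add: algebra_simps)
  qed
  then obtain k where "\<forall>x\<in>UNIV. d x = k" using has_field_derivative_zero_constant[of UNIV d] by auto
  then have "d s = d 0" by auto
  then show ?thesis using i by (simp add: d_def)
qed

lemma S_split:
  assumes "a \<le> j"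
  shows "G (s + t) (map x [a..<Suc j]) = (\<Sum>k=a..j. G s (map x [a..<Suc k]) * G t (map x [k..<Suc j]))"
  using assms
proof (induction j arbitrary: t rule: dec_induct)
  case base
  then show ?case by (simp add: G_single distrib_right exp_add)
next
  case (step n)
  let ?f = "\<lambda>t. G (s + t) (map x [a..<Suc (Suc n)])"
  let ?g = "\<lambda>t. (\<Sum>k=a..Suc n. G s (map x [a..<Suc k]) * G t (map x [k..<Suc (Suc n)]))"
  let ?u = "\<lambda>t. G (s + t) (map x [a..<Suc n])"
  have "?f t = ?g t"
  proof (rule ode_C[where f = ?f and g = ?g and c = "x (Suc n)" and u = ?u])
    fix t
    have "((\<lambda>t. G (s + t) (map x [a..<Suc (Suc n)])) has_field_derivative
           (x (Suc n) * G (s+t) (map x [a..<Suc (Suc n)]) + G (s+t) (map x [a..<Suc n])) * 1) (at t)"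
      using step.hyps
      by (intro DERIV_chain2[OF G_deriv_upt] derivative_eq_intros) auto
    then show "(?f has_field_derivative (x (Suc n) * ?f t + ?u t)) (at t)" by simp
  next
    fix t
    have "(?g has_field_derivative (\<Sum>k=a..Suc n. G s (map x [a..<Suc k]) *
            (x (Suc n) * G t (map x [k..<Suc (Suc n)]) + G t (map x [k..<Suc n])))) (at t)"
      by (intro DERIV_sum DERIV_cmult G_deriv_upt) auto
    moreover have "(\<Sum>k=a..Suc n. G s (map x [a..<Suc k]) *
            (x (Suc n) * G t (map x [k..<Suc (Suc n)]) + G t (map x [k..<Suc n])))
          = x (Suc n) * ?g t + (\<Sum>k=a..Suc n. G s (map x [a..<Suc k]) * G t (map x [k..<Suc n]))"
      by (simp add: algebra_simps sum.distrib sum_distrib_left)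
    moreover have "(\<Sum>k=a..Suc n. G s (map x [a..<Suc k]) * G t (map x [k..<Suc n])) = ?u t"
      using step by (simp add: sum.nat_ivl_Suc' G_Nil)
    ultimately show "(?g has_field_derivative (x (Suc n) * ?g t + ?u t)) (at t)" by simp
  next
    have "?g 0 = G s (map x [a..<Suc (Suc n)]) * G 0 (map x [Suc n..<Suc (Suc n)])
             + (\<Sum>k=a..n. G s (map x [a..<Suc k]) * G 0 (map x [k..<Suc (Suc n)]))"
      using step.hyps by (simp add: sum.nat_ivl_Suc')
    also have "\<dots> = G s (map x [a..<Suc (Suc n)])"
    proof -
      have z: "\<And>k. k \<in> {a..n} \<Longrightarrow> G 0 (map x [k..<Suc (Suc n)]) = 0"
        by (intro G_zero_upt) auto
      have o: "G 0 (map x [Suc n..<Suc (Suc n)]) = 1" by (simp add: G_single)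
      have "(\<Sum>k=a..n. G s (map x [a..<Suc k]) * G 0 (map x [k..<Suc (Suc n)])) = 0"
        by (rule sum.neutral) (use z in \<open>simp del: upt_Suc\<close>)
      then show ?thesis by (simp only: o) simp
    qed
    finally show "?f 0 = ?g 0" by simp
  qed
  then show ?case .
qed

lemma DERIV_sum_list:
  "(\<And>b. b \<in> set L \<Longrightarrow> ((\<lambda>s. F b s) has_field_derivative F' b s) (at s)) \<Longrightarrow>
   ((\<lambda>s. \<Sum>b\<leftarrow>L. F b s) has_field_derivative (\<Sum>b\<leftarrow>L. F' b s)) (at s)"
  by (induction L) (auto intro!: derivative_eq_intros)

lemma D_lemma: "s * G s B = (\<Sum>b\<leftarrow>B. G s (B @ [b]))"
proof (induction B arbitrary: s rule: rev_induct)
  case Nil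
  then show ?case by (simp add: G_Nil)
next
  case (snoc y B0)
  let ?B = "B0 @ [y]"
  let ?f = "\<lambda>s. s * G s ?B"
  let ?g = "\<lambda>s. (\<Sum>b\<leftarrow>?B. G s ((B0 @ [b]) @ [y]))"
  let ?u = "\<lambda>s. G s ?B + s * G s B0"
  have "?f s = ?g s"
  proof (rule ode_C[where f = ?f and g = ?g and c = y and u = ?u])
    fix s
    have "(?f has_field_derivative (1 * G s ?B + (y * G s ?B + G s B0) * s)) (at s)"
      by (intro DERIV_mult DERIV_ident G_deriv)
    then show "(?f has_field_derivative (y * ?f s + ?u s)) (at s)"
      by (rule DERIV_cong) (simp add: algebra_simps)
  next
    fix s
    have "(?g has_field_derivative (\<Sum>b\<leftarrow>?B. y * G s ((B0 @ [b]) @ [y]) + G s (B0 @ [b]))) (at s)"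
      by (intro DERIV_sum_list G_deriv)
    moreover have "(\<Sum>b\<leftarrow>?B. y * G s ((B0 @ [b]) @ [y]) + G s (B0 @ [b])) = y * ?g s + ?u s"
      using snoc[of s] by (simp add: sum_list_addf sum_list_const_mult distrib_left)
    ultimately show "(?g has_field_derivative (y * ?g s + ?u s)) (at s)" by (rule DERIV_cong)
  next
    show "?f 0 = ?g 0"
      by (simp add: G_zero del: append_assoc)
  qed
  moreover have "?g s = (\<Sum>b\<leftarrow>?B. G s (?B @ [b]))"
    by (intro arg_cong[where f = sum_list] map_cong refl G_mset) simp
  ultimately show ?case by simp
qed

lemma G_isCont: "isCont (\<lambda>s. G s ys) s"
proof (cases ys rule: rev_cases)
  case Nil then show ?thesis by (simp add: G_Nil)
next
  case (snoc zs y)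
  show ?thesis unfolding snoc by (rule DERIV_isCont[OF G_deriv])
qed

lemma G_cont [continuous_intros]:
  assumes "continuous_on A f" shows "continuous_on A (\<lambda>t. G (f t) ys)"
proof -
  have "continuous_on UNIV (\<lambda>s. G s ys)" by (intro continuous_at_imp_continuous_on ballI G_isCont)
  then show ?thesis by (rule continuous_on_compose2[OF _ assms]) auto
qed

lemma G_vderiv_upt: assumes "k \<le> m"
  shows "((\<lambda>\<tau>. G (- of_real \<tau>) (map x [k..<Suc m])) has_vector_derivative
    (- (x m * G (- of_real \<tau>) (map x [k..<Suc m]) + G (- of_real \<tau>) (map x [k..<m])))) (at \<tau> within S)"
proof -
  have "((\<lambda>s. G (- s) (map x [k..<Suc m])) has_field_derivative
    ((x m * G (- s) (map x [k..<Suc m]) + G (- s) (map x [k..<m])) * (- 1))) (at s)" for s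
    by (rule DERIV_chain2[OF G_deriv_upt[OF assms]]) (rule derivative_eq_intros refl | simp)+
  from has_vector_derivative_real_field[OF this[of "of_real \<tau>"]] show ?thesis by simp
qed

lemma G_vderiv_snoc:
  shows "((\<lambda>\<tau>. G (- of_real \<tau>) (ys @ [y])) has_vector_derivative
    (- (y * G (- of_real \<tau>) (ys @ [y]) + G (- of_real \<tau>) ys))) (at \<tau> within S)"
proof -
  have "((\<lambda>s. G (- s) (ys @ [y])) has_field_derivative
    ((y * G (- s) (ys @ [y]) + G (- s) ys) * (- 1))) (at s)" for s
    by (rule DERIV_chain2[OF G_deriv]) (rule derivative_eq_intros refl | simp)+
  from has_vector_derivative_real_field[OF this[of "of_real \<tau>"]] show ?thesis by simp
qed

lemma ode_R:
  fixes f g u :: "real \<Rightarrow> complex"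
  assumes df: "\<And>t. t \<in> {0..b} \<Longrightarrow> (f has_vector_derivative (c * f t + u t)) (at t within {0..b})"
    and dg: "\<And>t. t \<in> {0..b} \<Longrightarrow> (g has_vector_derivative (c * g t + u t)) (at t within {0..b})"
    and i: "f 0 = g 0" and t: "t \<in> {0..b}"
  shows "f t = g t"
proof -
  define d where "d = (\<lambda>t. exp (- (c * of_real t)) * (f t - g t))"
  have "(d has_vector_derivative 0) (at t within {0..b})" if "t \<in> {0..b}" for t
  proof -
    have "((\<lambda>z. exp (- (c * z))) has_field_derivative (exp (- (c * z)) * (- c))) (at z)" for z
      by (rule derivative_eq_intros refl | simp)+
    from has_vector_derivative_real_field[OF this]
    have h1: "((\<lambda>t. exp (- (c * of_real t))) has_vector_derivative (exp (- (c * of_real t)) * (- c))) (at t within {0..b})" .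
    have h2: "((\<lambda>t. f t - g t) has_vector_derivative ((c*f t+u t) - (c*g t + u t))) (at t within {0..b})"
      by (rule has_vector_derivative_diff df dg that)+
    have "(d has_vector_derivative (exp (- (c * of_real t)) * ((c*f t+u t) - (c*g t + u t)) +
              exp (- (c * of_real t)) * (- c) * (f t - g t))) (at t within {0..b})"
      unfolding d_def by (rule has_vector_derivative_mult[OF h1 h2])
    then show ?thesis by (rule has_vector_derivative_eq_rhs) (simp add: algebra_simps)
  qed
  then obtain k where k: "\<And>x. x \<in> {0..b} \<Longrightarrow> d x = k"
    using has_vector_derivative_zero_constant[of "{0..b}" d] by auto
  have "0 \<in> {0..b}" using t by auto
  then have "d t = d 0" using k t by auto
  then show ?thesis using i by (simp add: d_def)
qed

lemma vderiv_sum_list: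
  "(\<And>b. b \<in> set L \<Longrightarrow> ((\<lambda>s. F b s) has_vector_derivative F' b) (at t within S)) \<Longrightarrow>
   ((\<lambda>s. \<Sum>b\<leftarrow>L. F b s) has_vector_derivative (\<Sum>b\<leftarrow>L. F' b)) (at t within S)"
  by (induction L) (auto intro!: derivative_eq_intros)

definition J :: "(nat \<Rightarrow> complex) \<Rightarrow> complex list \<Rightarrow> nat \<Rightarrow> nat \<Rightarrow> real \<Rightarrow> complex" where
  "J x B r k T = integral {0..T} (\<lambda>\<tau>. of_real \<tau> * G (- of_real \<tau>) B * G (of_real \<tau>) (map x [r..<Suc k]))"

definition Wx :: "(nat \<Rightarrow> complex) \<Rightarrow> complex list \<Rightarrow> nat \<Rightarrow> nat \<Rightarrow> real \<Rightarrow> complex" where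
  "Wx x B r j T = (\<Sum>k=r..j. G (- of_real T) (map x [k..<Suc j]) * J x B r k T)"

definition Vx :: "(nat \<Rightarrow> complex) \<Rightarrow> complex list \<Rightarrow> nat \<Rightarrow> nat \<Rightarrow> real \<Rightarrow> complex" where
  "Vx x B r j T = (\<Sum>b\<leftarrow>B. G (- of_real T) (map x [r..<Suc j] @ B @ [b]))"

definition Ux :: "(nat \<Rightarrow> complex) \<Rightarrow> complex list \<Rightarrow> nat \<Rightarrow> nat \<Rightarrow> real \<Rightarrow> complex" where
  "Ux x B r j T = of_real T * G (- of_real T) B * G 0 (map x [r..<Suc j])
      - (\<Sum>k=r..j. G (- of_real T) (map x [k..<j]) * J x B r k T)"

lemma J_deriv: assumes "T \<in> {0..b}"
  shows "(J x B r k has_vector_derivative (of_real T * G (- of_real T) B * G (of_real T) (map x [r..<Suc k]))) (at T within {0..b})"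
  unfolding J_def[abs_def]
  by (rule integral_has_vector_derivative[OF _ assms]) (intro continuous_intros)

lemma Wx_deriv: assumes "r \<le> j" "T \<in> {0..b}"
  shows "(Wx x B r j has_vector_derivative (- x j * Wx x B r j T + Ux x B r j T)) (at T within {0..b})"
proof -
  have "(Wx x B r j has_vector_derivative
     (\<Sum>k=r..j. G (- of_real T) (map x [k..<Suc j]) * (of_real T * G (- of_real T) B * G (of_real T) (map x [r..<Suc k]))
        + (- (x j * G (- of_real T) (map x [k..<Suc j]) + G (- of_real T) (map x [k..<j]))) * J x B r k T))
     (at T within {0..b})"
    unfolding Wx_def[abs_def]
    by (intro has_vector_derivative_sum has_vector_derivative_mult J_deriv G_vderiv_upt assms) auto
  moreover
  have S: "(\<Sum>k=r..j. G (of_real T) (map x [r..<Suc k]) * G (- of_real T) (map x [k..<Suc j])) = G 0 (map x [r..<Suc j])"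
    using S_split[OF assms(1), where x = x and s = "of_real T" and t = "- of_real T"] by simp
  have "(\<Sum>k=r..j. G (- of_real T) (map x [k..<Suc j]) * (of_real T * G (- of_real T) B * G (of_real T) (map x [r..<Suc k]))
        + (- (x j * G (- of_real T) (map x [k..<Suc j]) + G (- of_real T) (map x [k..<j]))) * J x B r k T)
     = of_real T * G (- of_real T) B * (\<Sum>k=r..j. G (of_real T) (map x [r..<Suc k]) * G (- of_real T) (map x [k..<Suc j]))
       - x j * Wx x B r j T - (\<Sum>k=r..j. G (- of_real T) (map x [k..<j]) * J x B r k T)"
    unfolding Wx_def
    by (simp add: sum.distrib sum_distrib_left sum_subtractf algebra_simps)
  then have "(\<Sum>k=r..j. G (- of_real T) (map x [k..<Suc j]) * (of_real T * G (- of_real T) B * G (of_real T) (map x [r..<Suc k]))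
        + (- (x j * G (- of_real T) (map x [k..<Suc j]) + G (- of_real T) (map x [k..<j]))) * J x B r k T)
     = - x j * Wx x B r j T + Ux x B r j T"
    unfolding S Ux_def by simp
  ultimately show ?thesis by simp
qed

lemma sl_helper: "(\<Sum>b\<leftarrow>L. - ((c::complex) * f b + g b)) = - c * (\<Sum>b\<leftarrow>L. f b) - (\<Sum>b\<leftarrow>L. g b)"
proof (induction L)
  case (Cons a L)
  have "(\<Sum>b\<leftarrow>a # L. - (c * f b + g b)) = - (c * f a + g a) + (- c * (\<Sum>b\<leftarrow>L. f b) - (\<Sum>b\<leftarrow>L. g b))"
    using Cons.IH by simp
  then show ?case by (simp add: algebra_simps)
qed simp

lemma Vx_deriv: assumes "r \<le> j"
  shows "(Vx x B r j has_vector_derivative (- x j * Vx x B r j T - (\<Sum>b\<leftarrow>B. G (- of_real T) (map x [r..<j] @ B @ [b]))))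
     (at T within S)"
proof -
  have e: "Vx x B r j = (\<lambda>T. \<Sum>b\<leftarrow>B. G (- of_real T) ((map x [r..<j] @ B @ [b]) @ [x j]))"
    unfolding Vx_def[abs_def] using assms
    by (intro ext arg_cong[where f = sum_list] map_cong refl G_mset) simp
  have "(Vx x B r j has_vector_derivative
     (\<Sum>b\<leftarrow>B. - (x j * G (- of_real T) ((map x [r..<j] @ B @ [b]) @ [x j]) + G (- of_real T) (map x [r..<j] @ B @ [b]))))
     (at T within S)"
    unfolding e by (intro vderiv_sum_list G_vderiv_snoc)
  moreover have "(\<Sum>b\<leftarrow>B. - (x j * G (- of_real T) ((map x [r..<j] @ B @ [b]) @ [x j]) + G (- of_real T) (map x [r..<j] @ B @ [b])))
     = - x j * Vx x B r j T - (\<Sum>b\<leftarrow>B. G (- of_real T) (map x [r..<j] @ B @ [b]))"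
    unfolding e by (rule sl_helper)
  ultimately show ?thesis by simp
qed

lemma W_eq_V: assumes "r \<le> j" shows "\<forall>T\<in>{0..b}. Wx x B r j T = Vx x B r j T"
  using assms
proof (induction j rule: dec_induct)
  case base
  show ?case
  proof
    fix T assume T: "T \<in> {0..b}"
    show "Wx x B r r T = Vx x B r r T"
    proof (rule ode_R[where c = "- x r" and u = "Ux x B r r", OF _ _ _ T])
      fix t assume t: "t \<in> {0..b}"
      show "(Wx x B r r has_vector_derivative (- x r * Wx x B r r t + Ux x B r r t)) (at t within {0..b})"
        using Wx_deriv[OF order_refl t] .
      have Dl: "of_real t * G (- of_real t) B = - (\<Sum>b\<leftarrow>B. G (- of_real t) (B @ [b]))"
        using D_lemma[of "- of_real t" B] by (metis minus_minus mult_minus_left)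
      have "Ux x B r r t = - (\<Sum>b\<leftarrow>B. G (- of_real t) (map x [r..<r] @ B @ [b]))"
        unfolding Ux_def using Dl by (simp add: G_single G_Nil)
      then show "(Vx x B r r has_vector_derivative (- x r * Vx x B r r t + Ux x B r r t)) (at t within {0..b})"
        using Vx_deriv[OF order_refl, of x B r t "{0..b}"] by simp
    next
      show "Wx x B r r 0 = Vx x B r r 0"
        unfolding Wx_def Vx_def J_def by (simp add: G_zero)
    qed
  qed
next
  case (step n)
  show ?case
  proof
    fix T assume T: "T \<in> {0..b}"
    show "Wx x B r (Suc n) T = Vx x B r (Suc n) T"
    proof (rule ode_R[where c = "- x (Suc n)" and u = "Ux x B r (Suc n)", OF _ _ _ T])
      fix t assume t: "t \<in> {0..b}"
      show "(Wx x B r (Suc n) has_vector_derivative (- x (Suc n) * Wx x B r (Suc n) t + Ux x B r (Suc n) t)) (at t within {0..b})"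
        using Wx_deriv[OF _ t] step.hyps by simp
      have "Ux x B r (Suc n) t = - Wx x B r n t"
        unfolding Ux_def Wx_def using step.hyps
        by (simp add: G_zero_upt sum.nat_ivl_Suc' G_Nil del: upt_Suc)
      also have "\<dots> = - (\<Sum>b\<leftarrow>B. G (- of_real t) (map x [r..<Suc n] @ B @ [b]))"
        using step.IH t unfolding Vx_def by simp
      finally show "(Vx x B r (Suc n) has_vector_derivative (- x (Suc n) * Vx x B r (Suc n) t + Ux x B r (Suc n) t)) (at t within {0..b})"
        using Vx_deriv[of r "Suc n" x B t "{0..b}"] step.hyps by simp
    next
      show "Wx x B r (Suc n) 0 = Vx x B r (Suc n) 0"
        unfolding Wx_def Vx_def J_def using step.hyps by (simp add: G_zero del: upt_Suc)
    qed
  qed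
qed

lemma mset_fact: assumes "r \<le> j" "j \<le> q"
  shows "mset (map x [r..<Suc j] @ map x [j..<Suc q] @ [x m]) = mset (map x [r..<Suc q] @ [x j, x m])"
proof -
  have a: "[r..<Suc j] = [r..<j] @ [j]" using assms by simp
  have b: "[r..<Suc q] = [r..<j] @ [j..<Suc q]"
    using assms upt_add_eq_append[of r j "Suc q - j"] by simp
  show ?thesis unfolding a b by (simp add: add_ac)
qed

theorem corollary2:
  fixes x :: "nat \<Rightarrow> complex" and q j :: nat and \<beta> :: real
  assumes "j \<le> q" and "\<beta> > 0"
  shows "integral {0..\<beta>/2}
           (\<lambda>\<tau>. complex_of_real \<tau> * dd_exp (-\<tau>) (map x [j..<Suc q])
                 * dd_exp (-(\<beta> - \<tau>)) (map x [0..<Suc j]))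
       = (\<Sum>r=0..j. dd_exp (-(\<beta>/2)) (map x [0..<Suc r])
            * (\<Sum>m=j..q. dd_exp (-(\<beta>/2)) (map x [r..<Suc q] @ [x j, x m])))"
proof -
  define T where "T = \<beta>/2"
  have T0: "0 \<le> T" using assms unfolding T_def by simp
  define B where "B = map x [j..<Suc q]"
  define F where "F = (\<lambda>r k \<tau>. of_real \<tau> * G (- of_real \<tau>) B * G (of_real \<tau>) (map x [r..<Suc k]))"
  have Fc: "continuous_on A (F r k)" for r k A unfolding F_def by (intro continuous_intros)
  have integrand: "complex_of_real \<tau> * dd_exp (-\<tau>) B * dd_exp (-(\<beta> - \<tau>)) (map x [0..<Suc j]) =
     (\<Sum>r=0..j. G (- of_real T) (map x [0..<Suc r]) *
        (\<Sum>k=r..j. G (- of_real T) (map x [k..<Suc j]) * F r k \<tau>))" for \<tau>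
  proof -
    have e1: "complex_of_real (-(\<beta> - \<tau>)) = - of_real T + (of_real \<tau> + - of_real T)"
      unfolding T_def by simp
    have "G (- of_real T + (of_real \<tau> + - of_real T)) (map x [0..<Suc j]) =
      (\<Sum>r=0..j. G (- of_real T) (map x [0..<Suc r]) * G (of_real \<tau> + - of_real T) (map x [r..<Suc j]))"
      by (rule S_split) simp
    also have "\<dots> = (\<Sum>r=0..j. G (- of_real T) (map x [0..<Suc r]) *
        (\<Sum>k=r..j. G (of_real \<tau>) (map x [r..<Suc k]) * G (- of_real T) (map x [k..<Suc j])))"
      by (intro sum.cong refl arg_cong2[where f = times] S_split) auto
    finally have "complex_of_real \<tau> * dd_exp (-\<tau>) B * dd_exp (-(\<beta> - \<tau>)) (map x [0..<Suc j]) =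
       complex_of_real \<tau> * G (- of_real \<tau>) B * (\<Sum>r=0..j. G (- of_real T) (map x [0..<Suc r]) *
        (\<Sum>k=r..j. G (of_real \<tau>) (map x [r..<Suc k]) * G (- of_real T) (map x [k..<Suc j])))"
      unfolding dd_G e1 by simp
    then show ?thesis unfolding F_def by (simp add: sum_distrib_left algebra_simps)
  qed
  have "integral {0..T} (\<lambda>\<tau>. complex_of_real \<tau> * dd_exp (-\<tau>) B * dd_exp (-(\<beta> - \<tau>)) (map x [0..<Suc j]))
      = integral {0..T} (\<lambda>\<tau>. \<Sum>r=0..j. G (- of_real T) (map x [0..<Suc r]) *
        (\<Sum>k=r..j. G (- of_real T) (map x [k..<Suc j]) * F r k \<tau>))"
    unfolding integrand ..
  also have "\<dots> = (\<Sum>r=0..j. integral {0..T} (\<lambda>\<tau>. G (- of_real T) (map x [0..<Suc r]) *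
        (\<Sum>k=r..j. G (- of_real T) (map x [k..<Suc j]) * F r k \<tau>)))"
    by (rule integral_sum) (auto intro!: integrable_continuous_interval continuous_intros Fc)
  also have "\<dots> = (\<Sum>r=0..j. G (- of_real T) (map x [0..<Suc r]) * Wx x B r j T)"
  proof (intro sum.cong refl)
    fix r assume r: "r \<in> {0..j}"
    have "integral {0..T} (\<lambda>\<tau>. \<Sum>k=r..j. G (- of_real T) (map x [k..<Suc j]) * F r k \<tau>)
       = (\<Sum>k=r..j. integral {0..T} (\<lambda>\<tau>. G (- of_real T) (map x [k..<Suc j]) * F r k \<tau>))"
      by (rule integral_sum) (auto intro!: integrable_continuous_interval continuous_intros Fc)
    also have "\<dots> = Wx x B r j T"
      unfolding Wx_def J_def F_def by simp
    finally show "integral {0..T} (\<lambda>\<tau>. G (- of_real T) (map x [0..<Suc r]) *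
        (\<Sum>k=r..j. G (- of_real T) (map x [k..<Suc j]) * F r k \<tau>)) =
        G (- of_real T) (map x [0..<Suc r]) * Wx x B r j T" by simp
  qed
  also have "\<dots> = (\<Sum>r=0..j. G (- of_real T) (map x [0..<Suc r]) * Vx x B r j T)"
    using W_eq_V[of _ j T x B] T0 by (intro sum.cong refl) auto
  also have "\<dots> = (\<Sum>r=0..j. G (- of_real T) (map x [0..<Suc r]) *
       (\<Sum>m=j..q. G (- of_real T) (map x [r..<Suc q] @ [x j, x m])))"
  proof (intro sum.cong refl arg_cong2[where f = times])
    fix r assume r: "r \<in> {0..j}"
    have "Vx x B r j T = (\<Sum>m\<leftarrow>[j..<Suc q]. G (- of_real T) (map x [r..<Suc j] @ B @ [x m]))"
      unfolding Vx_def B_def by (simp add: comp_def del: upt_Suc)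
    also have "\<dots> = (\<Sum>m=j..q. G (- of_real T) (map x [r..<Suc j] @ B @ [x m]))"
      by (simp add: sum_set_upt_conv_sum_list_nat[symmetric] atLeastLessThanSuc_atLeastAtMost del: upt_Suc)
    also have "\<dots> = (\<Sum>m=j..q. G (- of_real T) (map x [r..<Suc q] @ [x j, x m]))"
      unfolding B_def using r assms(1) by (intro sum.cong refl G_mset mset_fact) auto
    finally show "Vx x B r j T = (\<Sum>m=j..q. G (- of_real T) (map x [r..<Suc q] @ [x j, x m]))" .
  qed
  finally show ?thesis unfolding T_def[symmetric] B_def[symmetric] dd_G by simp
qed

end
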